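(* Let $q\ge2$ and $L\ge2$ be integers, let $\mathcal{C}\subseteq[q]^n$ be a code, and suppose the matrix $\varphi(\mathcal{C})/\sqrt{(q-1)n}$ satisfies RIP-2 of order $L$ with constant $1/2$. Then for every set of $L$ distinct codewords $c_1,\dots,c_L\in\mathcal{C}$, the average pairwise relative distance $\binom{L}{2}^{-1}\sum_{1\le i<j\le L}\delta(c_i,c_j)$ is at least $\big(1-\frac1q\big)\big(1-\frac{1}{2(L-1)}\big)$.
   Context: $[q]=\{0,1,\dots,q-1\}$; $\delta(x,y)$ is the fraction of coordinates where $x,y\in[q]^n$ differ. Simplex encoding: for $x\in[q]$, $\varphi(x)\in\mathbb{C}^{q-1}$ has coordinates $\varphi(x)(\alpha)=\omega^{x\alpha}$ for $\alpha\in\{1,\dots,q-1\}$, $\omega=e^{2\pi\mathbf{i}/q}$; for $x\in[q]^n$, $\varphi(x)\in\mathbb{C}^{n(q-1)}$ is the concatenation of $\varphi(x_1),\dots,\varphi(x_n)$. For a code $\mathcal{C}\subseteq[q]^n$, $\varphi(\mathcal{C})$ is the $(q-1)n\times|\mathcal{C}|$ complex matrix whose columns are indexed by $c\in\mathcal{C}$, the column for $c$ being $\varphi(c)$. A matrix $M\in\mathbb{C}^{m\times N}$ satisfies RIP-2 of order $k$ with constant $\delta$ if for every $x\in\mathbb{C}^N$ with at most $k$ nonzero entries, $(1-\delta)\|x\|_2^2\le\|Mx\|_2^2\le(1+\delta)\|x\|_2^2$ (Euclidean norms). *)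

theory Defs
  imports "HOL-Analysis.Analysis"
begin

definition words :: "nat \<Rightarrow> nat \<Rightarrow> nat list set" where
  "words q n = {xs. length xs = n \<and> (\<forall>a\<in>set xs. a < q)}"

definition rel_dist :: "nat list \<Rightarrow> nat list \<Rightarrow> real" where
  "rel_dist x y = real (card {i. i < length x \<and> x ! i \<noteq> y ! i}) / real (length x)"

text \<open>Simplex encoding: coordinate (i, alpha), with i < n and 1 \<le> alpha \<le> q-1,
  of phi(x) is omega^(x_i * alpha), omega = exp(2 pi i / q).\<close>
definition simplex_enc :: "nat \<Rightarrow> nat list \<Rightarrow> nat \<times> nat \<Rightarrow> complex" where
  "simplex_enc q x r = exp (2 * pi * \<i> * of_nat (x ! fst r * snd r) / of_nat q)"

definition simplex_rows :: "nat \<Rightarrow> nat \<Rightarrow> (nat \<times> nat) set" where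
  "simplex_rows q n = {..<n} \<times> {1..q-1}"

text \<open>RIP-2 of order k with constant d for the matrix with row index set R and
  column index set Cols, whose column indexed by c is M c.\<close>
definition rip2 :: "'r set \<Rightarrow> 'c set \<Rightarrow> ('c \<Rightarrow> 'r \<Rightarrow> complex) \<Rightarrow> nat \<Rightarrow> real \<Rightarrow> bool" where
  "rip2 R Cols M k d \<longleftrightarrow>
     (\<forall>x :: 'c \<Rightarrow> complex. card {c\<in>Cols. x c \<noteq> 0} \<le> k \<longrightarrow>
        (1 - d) * (\<Sum>c\<in>Cols. (cmod (x c))\<^sup>2) \<le> (\<Sum>r\<in>R. (cmod (\<Sum>c\<in>Cols. M c r * x c))\<^sup>2) \<and>
        (\<Sum>r\<in>R. (cmod (\<Sum>c\<in>Cols. M c r * x c))\<^sup>2) \<le> (1 + d) * (\<Sum>c\<in>Cols. (cmod (x c))\<^sup>2))"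

end

theory Submission
  imports Defs
begin

lemma enc_pow: "exp (2 * pi * \<i> * of_nat m / of_nat q) = exp (2 * pi * \<i> / of_nat q) ^ m"
proof -
  have "2 * pi * \<i> * of_nat m / of_nat q = of_nat m * (2 * pi * \<i> / of_nat q)" by simp
  thus ?thesis by (simp only: exp_of_nat_mult)
qed

lemma w_neq:
  fixes a b q :: nat
  assumes "a < b" "b < q"
  shows "exp (2 * pi * \<i> / of_nat q) ^ a \<noteq> exp (2 * pi * \<i> / of_nat q) ^ b"
proof
  let ?w = "exp (2 * pi * \<i> / of_nat q)"
  assume h: "?w ^ a = ?w ^ b"
  have "?w ^ b = ?w ^ a * ?w ^ (b - a)" using assms by (simp add: power_add[symmetric])
  with h have "?w ^ (b - a) = 1" by simp
  hence "exp (2 * pi * \<i> * of_nat (b - a) / of_nat q) = 1" by (simp only: enc_pow)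
  then obtain k :: int where k: "Im (2 * pi * \<i> * of_nat (b - a) / of_nat q) = of_int (2 * k) * pi"
    unfolding exp_eq_1 by blast
  have "2 * pi * real (b - a) / real q = 2 * pi * of_int k" using k by simp
  hence "(2 * pi) * (real (b - a) / real q) = (2 * pi) * of_int k" by (metis times_divide_eq_right)
  moreover have c: "2 * pi \<noteq> (0::real)" by simp
  ultimately have "real (b - a) / real q = of_int k" by (meson mult_left_cancel)
  hence "real (b - a) = real q * of_int k" using assms by (simp add: field_simps)
  hence e: "int (b - a) = int q * k" by (metis of_int_eq_iff of_int_mult of_int_of_nat_eq)
  have "0 < int (b - a)" "int (b - a) < int q" using assms by auto
  hence "0 < int q * k" "int q * k < int q" using e by auto
  hence "0 < k" using assms by (simp add: zero_less_mult_iff)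
  hence "int q * k \<ge> int q" using mult_left_mono[of 1 k "int q"] by simp
  thus False using \<open>int q * k < int q\<close> by simp
qed

lemma root_sum:
  fixes a b q :: nat
  assumes q: "q \<ge> 2" and "a < q" "b < q"
  shows "(\<Sum>\<alpha>\<in>{1..q-1}. exp (2 * pi * \<i> * of_nat (a * \<alpha>) / of_nat q) *
            cnj (exp (2 * pi * \<i> * of_nat (b * \<alpha>) / of_nat q)))
         = (if a = b then of_nat (q - 1) else -1)"
proof -
  define w where "w = exp (2 * pi * \<i> / of_nat q)"
  have w0: "w \<noteq> 0" unfolding w_def by simp
  have cw: "cnj w = inverse w" unfolding w_def
    by (simp add: exp_cnj exp_minus[symmetric])
  have wq: "w ^ q = 1"
  proof -
    have "w ^ q = exp (2 * pi * \<i> * of_nat q / of_nat q)" unfolding w_def by (simp only: enc_pow)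
    also have "\<dots> = exp (2 * pi * \<i>)" using q by simp
    finally show ?thesis by simp
  qed
  define z where "z = w ^ a * inverse w ^ b"
  have tm: "exp (2 * pi * \<i> * of_nat (a * \<alpha>) / of_nat q) *
            cnj (exp (2 * pi * \<i> * of_nat (b * \<alpha>) / of_nat q)) = z ^ \<alpha>" for \<alpha>
  proof -
    have "exp (2 * pi * \<i> * of_nat (a * \<alpha>) / of_nat q) *
            cnj (exp (2 * pi * \<i> * of_nat (b * \<alpha>) / of_nat q)) = w ^ (a * \<alpha>) * cnj (w ^ (b * \<alpha>))"
      unfolding w_def by (simp only: enc_pow)
    also have "\<dots> = z ^ \<alpha>" unfolding z_def by (simp add: cw power_mult power_mult_distrib)
    finally show ?thesis .
  qed
  have spl: "{..<q} = insert 0 {1..q-1}" using q by auto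
  show ?thesis
  proof (cases "a = b")
    case True
    hence "z = 1" unfolding z_def using w0 by (simp add: power_inverse)
    thus ?thesis unfolding tm using True by simp
  next
    case False
    have zn1: "z \<noteq> 1"
    proof
      assume "z = 1"
      hence "w ^ a = w ^ b" unfolding z_def using w0 by (simp add: power_inverse field_simps)
      thus False using False w_neq[of a b q] w_neq[of b a q] assms unfolding w_def
        by (metis linorder_neqE_nat)
    qed
    have "(w ^ a) ^ q = 1" "(w ^ b) ^ q = 1"
      by (simp_all add: power_mult[symmetric] mult.commute[of _ q]) (simp_all add: power_mult wq)
    hence zq: "z ^ q = 1" unfolding z_def
      by (simp add: power_mult_distrib power_inverse)
    have "(\<Sum>\<alpha><q. z ^ \<alpha>) = 0" using sum_gp_strict[of z q] zn1 zq by simp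
    hence "1 + (\<Sum>\<alpha>\<in>{1..q-1}. z ^ \<alpha>) = 0" unfolding spl by simp
    hence "(\<Sum>\<alpha>\<in>{1..q-1}. z ^ \<alpha>) = -1" by (simp add: add_eq_0_iff)
    thus ?thesis unfolding tm using False by simp
  qed
qed


lemma G_lemma:
  assumes q: "q \<ge> 2" and u: "u \<in> words q n" and v: "v \<in> words q n"
  shows "(\<Sum>r\<in>simplex_rows q n. simplex_enc q u r * cnj (simplex_enc q v r))
       = of_nat ((q - 1) * n) - of_nat q * of_nat (card {i. i < length u \<and> u ! i \<noteq> v ! i})"
proof -
  have lu: "length u = n" and lv: "length v = n" and uq: "\<And>i. i < n \<Longrightarrow> u ! i < q"
    and vq: "\<And>i. i < n \<Longrightarrow> v ! i < q"
    using u v unfolding words_def by auto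
  have "(\<Sum>r\<in>simplex_rows q n. simplex_enc q u r * cnj (simplex_enc q v r))
      = (\<Sum>i<n. \<Sum>\<alpha>\<in>{1..q-1}. simplex_enc q u (i, \<alpha>) * cnj (simplex_enc q v (i, \<alpha>)))"
    unfolding simplex_rows_def by (simp add: sum.cartesian_product)
  also have "\<dots> = (\<Sum>i<n. (if u ! i = v ! i then of_nat (q - 1) else -1))"
    by (rule sum.cong[OF refl], unfold simplex_enc_def fst_conv snd_conv, rule root_sum[OF q uq vq]) auto
  also have "\<dots> = (\<Sum>i<n. of_nat (q - 1) - of_nat q * (if u ! i \<noteq> v ! i then 1 else 0))"
    using q by (intro sum.cong) (auto simp: of_nat_diff)
  also have "\<dots> = of_nat ((q - 1) * n) - of_nat q * (\<Sum>i<n. (if u ! i \<noteq> v ! i then 1 else 0))"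
    by (simp add: sum_subtractf sum_distrib_left)
  also have "(\<Sum>i<n. (if u ! i \<noteq> v ! i then 1 else 0)) = (of_nat (card {i. i < length u \<and> u ! i \<noteq> v ! i}) :: complex)"
  proof -
    have "(\<Sum>i<n. (if u ! i \<noteq> v ! i then 1 else 0)) = (\<Sum>i\<in>{i\<in>{..<n}. u ! i \<noteq> v ! i}. 1 :: complex)"
      by (rule sum.inter_filter[symmetric]) simp
    also have "{i\<in>{..<n}. u ! i \<noteq> v ! i} = {i. i < length u \<and> u ! i \<noteq> v ! i}" using lu by auto
    finally show ?thesis by (simp only:) simp
  qed
  finally show ?thesis .
qed

lemma pair_sum:
  fixes f :: "nat \<Rightarrow> nat \<Rightarrow> real"
  assumes diag: "\<And>i. f i i = 0"
  shows "(\<forall>i<L. \<forall>j<L. f i j = f j i) \<Longrightarrow> (\<Sum>i<L. \<Sum>j<L. f i j) = 2 * (\<Sum>i<L. \<Sum>j\<in>{i<..<L}. f i j)"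
proof (induction L)
  case 0 then show ?case by simp
next
  case (Suc L)
  have e: "{i<..<Suc L} = insert L {i<..<L}" if "i < L" for i using that by auto
  have "(\<Sum>i<Suc L. \<Sum>j\<in>{i<..<Suc L}. f i j) = (\<Sum>i<L. \<Sum>j\<in>{i<..<Suc L}. f i j)"
  proof -
    have "{L<..<Suc L} = {}" by auto
    thus ?thesis by simp
  qed
  also have "\<dots> = (\<Sum>i<L. (\<Sum>j\<in>{i<..<L}. f i j) + f i L)"
    by (rule sum.cong) (auto simp: e)
  finally have r: "(\<Sum>i<Suc L. \<Sum>j\<in>{i<..<Suc L}. f i j) = (\<Sum>i<L. \<Sum>j\<in>{i<..<L}. f i j) + (\<Sum>i<L. f i L)"
    by (simp add: sum.distrib)
  have "(\<Sum>i<Suc L. \<Sum>j<Suc L. f i j) = (\<Sum>i<L. \<Sum>j<L. f i j) + (\<Sum>i<L. f i L) + (\<Sum>j<L. f L j)"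
    by (simp add: sum.distrib diag)
  also have "(\<Sum>j<L. f L j) = (\<Sum>i<L. f i L)" using Suc.prems by simp
  finally show ?case using Suc r by simp
qed


theorem lemma3p4:
  fixes q L n :: nat and C :: "nat list set" and c :: "nat \<Rightarrow> nat list"
  assumes "q \<ge> 2" and "L \<ge> 2"
    and "C \<subseteq> words q n"
    and "rip2 (simplex_rows q n) C
           (\<lambda>w r. simplex_enc q w r / complex_of_real (sqrt (real ((q - 1) * n)))) L (1/2)"
    and "inj_on c {..<L}" and "c ` {..<L} \<subseteq> C"
  shows "(\<Sum>i<L. \<Sum>j\<in>{i<..<L}. rel_dist (c i) (c j)) / real (L choose 2)
           \<ge> (1 - 1 / real q) * (1 - 1 / (2 * (real L - 1)))"
proof -
  note q = assms(1) and L2 = assms(2) and Cw = assms(3) and rip = assms(4) and inj = assms(5)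
    and cC = assms(6)
  define A where "A = c ` {..<L}"
  define N where "N = (q - 1) * n"
  define s where "s = sqrt (real N)"
  define R where "R = simplex_rows q n"
  define S where "S = (\<Sum>i<L. \<Sum>j\<in>{i<..<L}. rel_dist (c i) (c j))"
  have cardA: "card A = L" unfolding A_def using inj by (simp add: card_image)
  have cw: "\<And>l. l < L \<Longrightarrow> c l \<in> words q n" using cC Cw by auto
  have len: "\<And>l. l < L \<Longrightarrow> length (c l) = n" using cw unfolding words_def by auto
  have finW: "finite (words q n)"
  proof -
    have "words q n \<subseteq> {xs. set xs \<subseteq> {..<q} \<and> length xs = n}" unfolding words_def by auto
    thus ?thesis using finite_lists_length_eq[of "{..<q}" n] finite_subset by blast
  qed
  have finC: "finite C" using finW Cw finite_subset by blast
  have n0: "n > 0"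
  proof (rule ccontr)
    assume "\<not> n > 0"
    hence "words q n \<subseteq> {[]}" unfolding words_def by auto
    hence "A \<subseteq> {[]}" using cC Cw unfolding A_def by auto
    hence "card A \<le> 1" using card_mono[of "{[]}" A] by auto
    thus False using cardA L2 by simp
  qed
  have N0: "N > 0" unfolding N_def using q n0 by simp
  have s2: "s ^ 2 = real N" unfolding s_def by simp
  have s0: "s > 0" unfolding s_def using N0 by simp
  define x where "x = (\<lambda>w. if w \<in> A then (1::complex) else 0)"
  have supp: "{w\<in>C. x w \<noteq> 0} = A" unfolding x_def A_def using cC by auto
  have AC: "A \<subseteq> C" unfolding A_def using cC .
  have sumx: "(\<Sum>w\<in>C. (cmod (x w))\<^sup>2) = real L"
  proof -
    have "(\<Sum>w\<in>C. (cmod (x w))\<^sup>2) = (\<Sum>w\<in>C. if w \<in> A then 1 else 0)"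
      unfolding x_def by (intro sum.cong) auto
    also have "\<dots> = (\<Sum>w\<in>C \<inter> A. 1)" using sum.inter_restrict[OF finC, of "\<lambda>_. 1::real" A] by simp
    also have "\<dots> = real (card (C \<inter> A))" by simp
    also have "C \<inter> A = A" using AC by auto
    finally show ?thesis using cardA by simp
  qed
  define e where "e = (\<lambda>l r. simplex_enc q (c l) r)"
  have sumM: "(\<Sum>w\<in>C. simplex_enc q w r / complex_of_real s * x w) = (\<Sum>l<L. e l r) / complex_of_real s" for r
  proof -
    have "(\<Sum>w\<in>C. simplex_enc q w r / complex_of_real s * x w)
        = (\<Sum>w\<in>C. if w \<in> A then simplex_enc q w r / complex_of_real s else 0)"
      unfolding x_def by (intro sum.cong) auto
    also have "\<dots> = (\<Sum>w\<in>C \<inter> A. simplex_enc q w r / complex_of_real s)"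
      using sum.inter_restrict[OF finC, of "\<lambda>w. simplex_enc q w r / complex_of_real s" A] by simp
    also have "C \<inter> A = A" using AC by auto
    also have "(\<Sum>w\<in>A. simplex_enc q w r / complex_of_real s) = (\<Sum>l<L. simplex_enc q (c l) r / complex_of_real s)"
      unfolding A_def using inj by (simp add: sum.reindex)
    finally show ?thesis unfolding e_def by (simp add: sum_divide_distrib)
  qed
  from rip[unfolded rip2_def, rule_format, of x] supp cardA
  have "(\<Sum>r\<in>R. (cmod (\<Sum>w\<in>C. simplex_enc q w r / complex_of_real s * x w))\<^sup>2)
          \<le> (1 + 1/2) * (\<Sum>w\<in>C. (cmod (x w))\<^sup>2)"
    unfolding R_def s_def N_def by simp
  hence h: "(\<Sum>r\<in>R. (cmod ((\<Sum>l<L. e l r) / complex_of_real s))\<^sup>2) \<le> (1 + 1/2) * real L"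
    unfolding sumM sumx .
  have eqr: "(cmod ((\<Sum>l<L. e l r) / complex_of_real s))\<^sup>2 = (cmod (\<Sum>l<L. e l r))\<^sup>2 / real N" for r
    using s0 by (simp add: norm_divide power_divide s2)
  have ineq: "(\<Sum>r\<in>R. (cmod (\<Sum>l<L. e l r))\<^sup>2) / real N \<le> 3/2 * real L"
    using h unfolding eqr sum_divide_distrib[symmetric] by simp
  have key: "complex_of_real (\<Sum>r\<in>R. (cmod (\<Sum>l<L. e l r))\<^sup>2)
      = (\<Sum>l<L. \<Sum>l'<L. complex_of_real (real N - real q * real n * rel_dist (c l) (c l')))"
  proof -
    have "complex_of_real (\<Sum>r\<in>R. (cmod (\<Sum>l<L. e l r))\<^sup>2)
        = (\<Sum>r\<in>R. (\<Sum>l<L. e l r) * cnj (\<Sum>l<L. e l r))"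
      by (simp only: of_real_sum complex_norm_square)
    also have "\<dots> = (\<Sum>r\<in>R. \<Sum>l<L. \<Sum>l'<L. e l r * cnj (e l' r))"
      by (simp add: sum_product)
    also have "\<dots> = (\<Sum>l<L. \<Sum>r\<in>R. \<Sum>l'<L. e l r * cnj (e l' r))"
      by (rule sum.swap)
    also have "\<dots> = (\<Sum>l<L. \<Sum>l'<L. \<Sum>r\<in>R. e l r * cnj (e l' r))"
      by (rule sum.cong[OF refl], rule sum.swap)
    also have "\<dots> = (\<Sum>l<L. \<Sum>l'<L. complex_of_real (real N - real q * real n * rel_dist (c l) (c l')))"
    proof (intro sum.cong refl)
      fix l l' assume l: "l \<in> {..<L}" and l': "l' \<in> {..<L}"
      have "(\<Sum>r\<in>R. e l r * cnj (e l' r)) = of_nat N - of_nat q * of_nat (card {i. i < length (c l) \<and> c l ! i \<noteq> c l' ! i})"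
        unfolding e_def R_def N_def using G_lemma[OF q cw cw] l l' by simp
      also have "real (card {i. i < length (c l) \<and> c l ! i \<noteq> c l' ! i}) = real n * rel_dist (c l) (c l')"
        unfolding rel_dist_def using len l n0 by simp
      hence "(of_nat (card {i. i < length (c l) \<and> c l ! i \<noteq> c l' ! i}) :: complex) = complex_of_real (real n * rel_dist (c l) (c l'))"
        by (metis of_real_of_nat_eq)
      finally show "(\<Sum>r\<in>R. e l r * cnj (e l' r)) = complex_of_real (real N - real q * real n * rel_dist (c l) (c l'))"
        by simp
    qed
    finally show ?thesis .
  qed
  have "(\<Sum>r\<in>R. (cmod (\<Sum>l<L. e l r))\<^sup>2) = (\<Sum>l<L. \<Sum>l'<L. (real N - real q * real n * rel_dist (c l) (c l')))"
  proof -
    have "complex_of_real (\<Sum>l<L. \<Sum>l'<L. (real N - real q * real n * rel_dist (c l) (c l')))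
       = (\<Sum>l<L. \<Sum>l'<L. complex_of_real (real N - real q * real n * rel_dist (c l) (c l')))"
      by (simp only: of_real_sum)
    from of_real_eq_iff[THEN iffD1, OF trans[OF key sym[OF this]]] show ?thesis .
  qed
  also have "\<dots> = real L * real L * real N - real q * real n * (\<Sum>l<L. \<Sum>l'<L. rel_dist (c l) (c l'))"
    by (simp add: sum_subtractf sum_distrib_left)
  also have "(\<Sum>l<L. \<Sum>l'<L. rel_dist (c l) (c l')) = 2 * S"
    unfolding S_def
  proof (rule pair_sum)
    show "\<forall>i<L. \<forall>j<L. rel_dist (c i) (c j) = rel_dist (c j) (c i)"
    proof (intro allI impI)
      fix i j assume "i < L" "j < L"
      hence "length (c i) = n" "length (c j) = n" using len by auto
      moreover have "{k. k < n \<and> c i ! k \<noteq> c j ! k} = {k. k < n \<and> c j ! k \<noteq> c i ! k}" by auto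
      ultimately show "rel_dist (c i) (c j) = rel_dist (c j) (c i)" unfolding rel_dist_def by simp
    qed
    show "rel_dist (c i) (c i) = 0" for i unfolding rel_dist_def by simp
  qed
  finally have tot: "(\<Sum>r\<in>R. (cmod (\<Sum>l<L. e l r))\<^sup>2) = real L * real L * real N - real q * real n * (2 * S)" .
  have Nr: "real N = (real q - 1) * real n" using q by (simp add: N_def of_nat_diff)
  have "(real L * real L * real N - real q * real n * (2 * S)) \<le> 3/2 * real L * real N"
    using ineq unfolding tot using N0 by (simp add: divide_le_eq)
  hence "real n * (real L * real L * (real q - 1) - 2 * real q * S) \<le> real n * (3/2 * real L * (real q - 1))"
    unfolding Nr by (simp add: algebra_simps)
  hence h1: "real L * real L * (real q - 1) - 2 * real q * S \<le> 3/2 * real L * (real q - 1)"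
    using n0 by (simp add: mult_le_cancel_left_pos)
  have q0: "real q > 0" using q by simp
  have S_ge: "S \<ge> (real q - 1) * real L * (2 * real L - 3) / (4 * real q)"
    using h1 q0 by (simp add: field_simps)
  have ch: "2 * (L choose 2) = L * (L - 1)"
  proof -
    have "even (L * (L - 1))" by auto
    thus ?thesis by (simp add: choose_two)
  qed
  have Cr: "real (L choose 2) = real L * (real L - 1) / 2"
  proof -
    have "2 * real (L choose 2) = real L * (real L - 1)" using L2 ch
      by (metis of_nat_1 of_nat_diff of_nat_mult of_nat_numeral le_trans one_le_numeral)
    thus ?thesis by simp
  qed
  have L1: "real L - 1 > 0" using L2 by simp
  have C0: "real (L choose 2) > 0" using Cr L1 L2 by simp
  have "(1 - 1 / real q) * (1 - 1 / (2 * (real L - 1))) * real (L choose 2)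
        = (real q - 1) * real L * (2 * real L - 3) / (4 * real q)"
    unfolding Cr using q0 L1 by (simp add: field_simps)
  hence "(1 - 1 / real q) * (1 - 1 / (2 * (real L - 1))) * real (L choose 2) \<le> S"
    using S_ge by simp
  thus ?thesis unfolding S_def[symmetric] using C0 by (simp add: le_divide_eq)
qed

end
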